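(* Let $H_0=\{x\in\mathbb{R}^n:\sum x_i=0\}$, $\hat e_i=e_i-\frac1n\sum_k e_k$, $\Delta_n^0=\mathrm{Conv}\{\hat e_1,\dots,\hat e_n\}$. Let $A:H_0\to H_0$ be a non-singular linear map and $B=(A^* )^{-1}$, where $A^*$ is the adjoint with respect to the standard inner product restricted to $H_0$. Then $$\big(Root(A(\Delta_n^0))\big)^\circ=Zono(B(\Delta_n^0)),$$ polarity taken inside $H_0$.
   Context: For a simplex $\Delta_A=\mathrm{Conv}\{a_1,\dots,a_n\}$, the generalized root polytope is $Root(\Delta_A)=\mathrm{Conv}\{a_i-a_j:1\le i\ne j\le n\}$. For a non-degenerate simplex with vertices $a_1,\dots,a_m$ and barycenter $a$, $Zono(\Delta_A)=\sum_i[a,a_i]$ (Minkowski sum); so $Zono(B(\Delta_n^0))=\sum_i[0,B\hat e_i]$. For $K\subset H_0$ with $0$ in its relative interior, $K^\circ=\{y\in H_0:\langle y,x\rangle\le 1\ \forall x\in K\}$. *)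

theory Defs
  imports "HOL-Analysis.Analysis"
begin

definition H0 :: "(real^'n) set" where
  "H0 = {x. (\<Sum>i\<in>UNIV. x $ i) = 0}"

definition hat_e :: "'n::finite \<Rightarrow> real^'n" where
  "hat_e i = axis i 1 - (1 / real CARD('n)) *\<^sub>R (\<Sum>k\<in>UNIV. axis k 1)"

definition root_polytope :: "('i \<Rightarrow> 'a::real_vector) \<Rightarrow> 'a set" where
  "root_polytope a = convex hull {a i - a j | i j. i \<noteq> j}"

definition barycenter :: "('i::finite \<Rightarrow> 'a::real_vector) \<Rightarrow> 'a" where
  "barycenter a = (1 / real CARD('i)) *\<^sub>R (\<Sum>i\<in>UNIV. a i)"

text \<open>Zono = Minkowski sum of the segments [c, a_i], c the barycenter.\<close>
definition zono :: "('i::finite \<Rightarrow> 'a::real_vector) \<Rightarrow> 'a set" where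
  "zono a = {barycenter a + (\<Sum>i\<in>UNIV. t i *\<^sub>R (a i - barycenter a)) | t.
               \<forall>i. 0 \<le> t i \<and> t i \<le> 1}"

definition polar_H0 :: "(real^'n) set \<Rightarrow> (real^'n) set" where
  "polar_H0 K = {y \<in> H0. \<forall>x\<in>K. y \<bullet> x \<le> 1}"

end

theory Submission
  imports Defs
begin

lemma hat_e_comp: "hat_e k $ i = (if k = i then 1 else 0) - 1 / real CARD('n)"
  for k i :: "'n::finite"
  by (simp add: hat_e_def sum_component axis_def)

lemma sum_hat_comp:
  "(\<Sum>k\<in>UNIV. t k *\<^sub>R hat_e k) $ i = t i - (\<Sum>k\<in>UNIV. t k) / real CARD('n)"
  for i :: "'n::finite"
proof -
  have "(\<Sum>k\<in>UNIV. t k *\<^sub>R hat_e k) $ i = (\<Sum>k\<in>UNIV. t k * ((if k = i then 1 else 0) - 1 / real CARD('n)))"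
    by (simp add: sum_component hat_e_comp)
  also have "\<dots> = (\<Sum>k\<in>UNIV. (if k = i then t k else 0)) - (\<Sum>k\<in>UNIV. t k) / real CARD('n)"
  proof -
    have "(\<Sum>k\<in>UNIV. t k * ((if k = i then 1 else 0) - 1 / real CARD('n))) =
          (\<Sum>k\<in>UNIV. (if k = i then t k else 0) - t k / real CARD('n))"
      by (intro sum.cong) (auto simp: algebra_simps)
    then show ?thesis by (simp add: sum_subtractf sum_divide_distrib)
  qed
  also have "\<dots> = t i - (\<Sum>k\<in>UNIV. t k) / real CARD('n)"
    by simp
  finally show ?thesis .
qed

lemma sum_hat_H0: "(\<Sum>k\<in>UNIV. t k *\<^sub>R hat_e k) \<in> H0"
proof -
  have "(\<Sum>i\<in>UNIV. (\<Sum>k\<in>UNIV. t k *\<^sub>R hat_e k) $ i) =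
        (\<Sum>i\<in>(UNIV::'a set). t i - (\<Sum>k\<in>UNIV. t k) / real CARD('a))"
    by (intro sum.cong refl, rule sum_hat_comp)
  also have "\<dots> = 0" by (simp add: sum_subtractf)
  finally show ?thesis by (simp add: H0_def)
qed

lemma hat_e_H0: "hat_e i \<in> H0"
proof -
  have "hat_e i = (\<Sum>k\<in>UNIV. (if k = i then 1 else 0) *\<^sub>R hat_e k)"
  proof -
    have "(\<Sum>k\<in>UNIV. (if k = i then 1 else 0) *\<^sub>R hat_e k) = (\<Sum>k\<in>UNIV. if k = i then hat_e k else 0)"
      by (intro sum.cong) auto
    then show ?thesis by simp
  qed
  then show ?thesis using sum_hat_H0 by metis
qed

lemma sum_hat_zero: "(\<Sum>k\<in>UNIV. hat_e k) = (0::real^'n::finite)"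
proof -
  have "(\<Sum>k\<in>UNIV. hat_e k) = (\<Sum>k\<in>UNIV. (\<lambda>_. 1) k *\<^sub>R hat_e k)" by simp
  moreover have "\<dots> $ i = 0" for i :: 'n by (subst sum_hat_comp) simp
  ultimately show ?thesis by (simp add: vec_eq_iff)
qed

lemma hat_diff: "hat_e i - hat_e j = axis i 1 - axis j 1"
  by (simp add: hat_e_def)

lemma inner_hat_diff: "w \<bullet> (hat_e i - hat_e j) = w $ i - w $ j"
  by (simp add: hat_diff inner_diff_right inner_axis)

lemma polar_hull:
  assumes "\<forall>x\<in>S. y \<bullet> x \<le> (1::real)"
  shows "\<forall>x\<in>convex hull S. y \<bullet> x \<le> 1"
proof -
  have "convex hull S \<subseteq> {x. y \<bullet> x \<le> 1}"
    by (rule hull_minimal) (use assms convex_halfspace_le in auto)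
  then show ?thesis by auto
qed

theorem mainTheorem10:
  fixes A Aadj B :: "real^'n \<Rightarrow> real^'n"
  assumes n2: "CARD('n) \<ge> 2"
    and linA: "linear A" and A_H0: "A ` H0 \<subseteq> H0" and A_inj: "inj_on A H0"
    and linAadj: "linear Aadj" and Aadj_H0: "Aadj ` H0 \<subseteq> H0"
    and adj: "\<forall>x\<in>H0. \<forall>y\<in>H0. Aadj y \<bullet> x = y \<bullet> A x"
    and linB: "linear B" and B_H0: "B ` H0 \<subseteq> H0"
    and B_inv: "\<forall>y\<in>H0. Aadj (B y) = y \<and> B (Aadj y) = y"
  shows "polar_H0 (root_polytope (\<lambda>i. A (hat_e i))) = zono (\<lambda>i. B (hat_e i))"
proof -
  have bary: "barycenter (\<lambda>i. B (hat_e i)) = 0"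
    unfolding barycenter_def
    using linear_sum[OF linB, of hat_e UNIV] sum_hat_zero linear_0[OF linB] by (metis scaleR_zero_right)
  have key: "y \<bullet> (A (hat_e i) - A (hat_e j)) = Aadj y $ i - Aadj y $ j" if "y \<in> H0" for y i j
  proof -
    have "hat_e i - hat_e j \<in> H0" using hat_e_H0[of i] hat_e_H0[of j]
      by (simp add: H0_def sum_subtractf)
    then have "y \<bullet> A (hat_e i - hat_e j) = Aadj y \<bullet> (hat_e i - hat_e j)"
      using adj that by auto
    then show ?thesis by (simp add: linear_diff[OF linA] inner_hat_diff)
  qed
  have zsum: "B (\<Sum>k\<in>UNIV. t k *\<^sub>R hat_e k) = (\<Sum>k\<in>UNIV. t k *\<^sub>R B (hat_e k))" for t
    by (simp add: linear_sum[OF linB] linear_cmul[OF linB])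
  show ?thesis
  proof
    show "polar_H0 (root_polytope (\<lambda>i. A (hat_e i))) \<subseteq> zono (\<lambda>i. B (hat_e i))"
    proof
      fix y assume y: "y \<in> polar_H0 (root_polytope (\<lambda>i. A (hat_e i)))"
      then have yH: "y \<in> H0" by (simp add: polar_H0_def)
      define z where "z = Aadj y"
      have zH: "z \<in> H0" using Aadj_H0 yH z_def by auto
      have rng: "z $ i - z $ j \<le> 1" for i j
      proof (cases "i = j")
        case False
        have "A (hat_e i) - A (hat_e j) \<in> root_polytope (\<lambda>i. A (hat_e i))"
          unfolding root_polytope_def using False by (intro hull_inc) auto
        then show ?thesis using y key[OF yH, of i j] by (auto simp: polar_H0_def z_def)
      qed simp
      define m where "m = Min (range (\<lambda>k. z $ k))"
      have mle: "m \<le> z $ k" for k unfolding m_def by (rule Min_le) auto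
      obtain j where mj: "m = z $ j"
      proof -
        have "Min (range (\<lambda>k. z $ k)) \<in> range (\<lambda>k. z $ k)" by (rule Min_in) auto
        then obtain j where "Min (range (\<lambda>k. z $ k)) = z $ j" by blast
        then show ?thesis using that m_def by blast
      qed
      define t where "t k = z $ k - m" for k
      have t01: "\<forall>k. 0 \<le> t k \<and> t k \<le> 1" using mle rng mj by (auto simp: t_def)
      have zs: "(\<Sum>k\<in>UNIV. z $ k) = 0" using zH by (simp add: H0_def)
      have "(\<Sum>k\<in>UNIV. t k *\<^sub>R hat_e k) = z"
      proof (subst vec_eq_iff, intro allI)
        fix i
        show "(\<Sum>k\<in>UNIV. t k *\<^sub>R hat_e k) $ i = z $ i"
          by (subst sum_hat_comp) (simp add: t_def sum_subtractf zs)
      qed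
      then have "y = (\<Sum>k\<in>UNIV. t k *\<^sub>R B (hat_e k))"
        using zsum[of t] B_inv yH z_def by auto
      then show "y \<in> zono (\<lambda>i. B (hat_e i))"
        unfolding zono_def bary using t01 by auto
    qed
  next
    show "zono (\<lambda>i. B (hat_e i)) \<subseteq> polar_H0 (root_polytope (\<lambda>i. A (hat_e i)))"
    proof
      fix y assume "y \<in> zono (\<lambda>i. B (hat_e i))"
      then obtain t where t01: "\<forall>i. 0 \<le> t i \<and> t i \<le> 1"
        and yt: "y = (\<Sum>k\<in>UNIV. t k *\<^sub>R B (hat_e k))"
        unfolding zono_def bary by auto
      define w where "w = (\<Sum>k\<in>UNIV. t k *\<^sub>R hat_e k)"
      have wH: "w \<in> H0" unfolding w_def by (rule sum_hat_H0)
      have yw: "y = B w" using yt zsum w_def by simp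
      have yH: "y \<in> H0" using yw wH B_H0 by auto
      have aw: "Aadj y = w" using yw wH B_inv by auto
      have "\<forall>x\<in>{A (hat_e i) - A (hat_e j) | i j. i \<noteq> j}. y \<bullet> x \<le> 1"
      proof safe
        fix i j :: 'n
        have "y \<bullet> (A (hat_e i) - A (hat_e j)) = t i - t j"
          using key[OF yH, of i j] aw sum_hat_comp[of t i] sum_hat_comp[of t j] by (simp only: w_def)
        then show "y \<bullet> (A (hat_e i) - A (hat_e j)) \<le> 1" using t01[rule_format, of i] t01[rule_format, of j]
          by simp
      qed
      then show "y \<in> polar_H0 (root_polytope (\<lambda>i. A (hat_e i)))"
        using polar_hull yH unfolding polar_H0_def root_polytope_def by blast
    qed
  qed
qed

end
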